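(* Let $n\ge1$ and $y>1$, and define $\alpha$ by $2\alpha=2\pi-\sigma_n(y)$. Then $0<\alpha<\pi$ and $U_n(2\alpha)=1/y$.
   Context: $\mathbb{T}=[0,2\pi)$ with endpoints identified, with Lebesgue measure $\mathrm{mes}$. $\mathcal{F}_n$ is the set of real trigonometric polynomials of order at most $n$. $\mu(f)=\mathrm{mes}\{t\in\mathbb{T}:|f(t)|\ge1\}$; $\mathcal{F}_n(y)=\{y\cos nt+f_{n-1}:f_{n-1}\in\mathcal{F}_{n-1}\}$; $\sigma_n(y)=\inf\{\mu(f):f\in\mathcal{F}_n(y)\}$. For compact $Q\subset\mathbb{T}$, $U_n(Q)=\inf\{\max_{t\in Q}|\cos nt-f_{n-1}(t)|:f_{n-1}\in\mathcal{F}_{n-1}\}$ and $U_n(2\alpha)=\inf\{U_n(Q):Q\text{ compact},\mathrm{mes}(Q)=2\alpha\}$. *)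

theory Defs
  imports "HOL-Analysis.Analysis"
begin

definition torus :: "real set" where
  "torus = {0..<2*pi}"

definition mes :: "real set \<Rightarrow> real" where
  "mes A = measure lebesgue A"

definition trig_polys :: "nat \<Rightarrow> (real \<Rightarrow> real) set" where
  "trig_polys n = {f. \<exists>a b :: nat \<Rightarrow> real.
      f = (\<lambda>t. a 0 + (\<Sum>k\<in>{1..n}. a k * cos (real k * t) + b k * sin (real k * t)))}"

definition mu :: "(real \<Rightarrow> real) \<Rightarrow> real" where
  "mu f = mes {t \<in> torus. \<bar>f t\<bar> \<ge> 1}"

definition trig_polys_lead :: "nat \<Rightarrow> real \<Rightarrow> (real \<Rightarrow> real) set" where
  "trig_polys_lead n y = {(\<lambda>t. y * cos (real n * t) + g t) | g. g \<in> trig_polys (n - 1)}"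

definition sigma_n :: "nat \<Rightarrow> real \<Rightarrow> real" where
  "sigma_n n y = Inf (mu ` trig_polys_lead n y)"

text \<open>A compact subset of the circle is represented by a compact subset of [0,2pi]
  (its lift); all functions involved are 2pi-periodic and the endpoints have measure zero.\<close>
definition U_set :: "nat \<Rightarrow> real set \<Rightarrow> real" where
  "U_set n Q = Inf ((\<lambda>g. Sup ((\<lambda>t. \<bar>cos (real n * t) - g t\<bar>) ` Q)) ` trig_polys (n - 1))"

definition U_meas :: "nat \<Rightarrow> real \<Rightarrow> real" where
  "U_meas n m = Inf (U_set n ` {Q. compact Q \<and> Q \<subseteq> {0..2*pi} \<and> mes Q = m})"

end

theory Submission
  imports Defs "HOL-Computational_Algebra.Polynomial"
begin

definition tp :: "nat \<Rightarrow> (nat\<Rightarrow>real) \<Rightarrow> (nat\<Rightarrow>real) \<Rightarrow> real \<Rightarrow> real" where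
  "tp N a b t = a 0 + (\<Sum>k\<in>{1..N}. a k * cos (real k * t) + b k * sin (real k * t))"

definition cd :: "nat \<Rightarrow> (nat\<Rightarrow>real) \<Rightarrow> (nat\<Rightarrow>real) \<Rightarrow> (nat\<Rightarrow>real) \<Rightarrow> (nat\<Rightarrow>real) \<Rightarrow> real" where
  "cd N a b a' b' = \<bar>a 0 - a' 0\<bar> + (\<Sum>k\<in>{1..N}. \<bar>a k - a' k\<bar> + \<bar>b k - b' k\<bar>)"

lemma trig_polys_iff: "f \<in> trig_polys N \<longleftrightarrow> (\<exists>a b. f = tp N a b)"
  unfolding trig_polys_def tp_def[abs_def] by auto

lemma tp_cont: "continuous_on S (tp N a b)"
  unfolding tp_def[abs_def] by (intro continuous_intros)

lemma tp_isCont: "isCont (tp N a b) t"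
  using tp_cont[of UNIV] continuous_on_eq_continuous_at by blast

lemma tp_b0: "tp N a (b(0:=c)) = tp N a b"
  unfolding tp_def[abs_def] by (intro ext arg_cong2[where f="(+)"] refl sum.cong) auto

lemma tp_scale: "tp N (\<lambda>k. c * a k) (\<lambda>k. c * b k) t = c * tp N a b t"
  unfolding tp_def by (simp add: algebra_simps sum_distrib_left)

lemma tp_diff: "\<bar>tp N a b t - tp N a' b' t\<bar> \<le> cd N a b a' b'"
proof -
  have "tp N a b t - tp N a' b' t = (a 0 - a' 0) +
     (\<Sum>k\<in>{1..N}. (a k - a' k) * cos (real k * t) + (b k - b' k) * sin (real k * t))"
    unfolding tp_def by (simp add: algebra_simps sum_subtractf[symmetric])
  also have "\<bar>\<dots>\<bar> \<le> \<bar>a 0 - a' 0\<bar> + \<bar>\<Sum>k\<in>{1..N}. (a k - a' k) * cos (real k * t) + (b k - b' k) * sin (real k * t)\<bar>"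
    by (rule abs_triangle_ineq)
  also have "\<bar>\<Sum>k\<in>{1..N}. (a k - a' k) * cos (real k * t) + (b k - b' k) * sin (real k * t)\<bar>
      \<le> (\<Sum>k\<in>{1..N}. \<bar>(a k - a' k) * cos (real k * t) + (b k - b' k) * sin (real k * t)\<bar>)"
    by (rule sum_abs)
  also have "\<dots> \<le> (\<Sum>k\<in>{1..N}. \<bar>a k - a' k\<bar> + \<bar>b k - b' k\<bar>)"
  proof (rule sum_mono)
    fix k
    have "\<bar>(a k - a' k) * cos (real k * t)\<bar> \<le> \<bar>a k - a' k\<bar>"
      by (simp add: abs_mult mult_left_le)
    moreover have "\<bar>(b k - b' k) * sin (real k * t)\<bar> \<le> \<bar>b k - b' k\<bar>"
      by (simp add: abs_mult mult_left_le)
    ultimately show "\<bar>(a k - a' k) * cos (real k * t) + (b k - b' k) * sin (real k * t)\<bar> \<le> \<bar>a k - a' k\<bar> + \<bar>b k - b' k\<bar>"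
      by (smt (verit, best) abs_triangle_ineq)
  qed
  finally show ?thesis unfolding cd_def by simp
qed

lemma cd_nonneg: "cd N a b a' b' \<ge> 0"
  unfolding cd_def by (intro add_nonneg_nonneg sum_nonneg) simp_all

definition nrm :: "nat \<Rightarrow> (nat\<Rightarrow>real) \<Rightarrow> (nat\<Rightarrow>real) \<Rightarrow> real" where
  "nrm N a b = cd N a b (\<lambda>_. 0) (\<lambda>_. 0)"

lemma nrm_diff: "\<bar>nrm N a b - nrm N a' b'\<bar> \<le> cd N a b a' b'"
proof -
  have e: "nrm N a b - nrm N a' b' = (\<bar>a 0\<bar> - \<bar>a' 0\<bar>) + (\<Sum>k\<in>{1..N}. (\<bar>a k\<bar> + \<bar>b k\<bar>) - (\<bar>a' k\<bar> + \<bar>b' k\<bar>))"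
    unfolding nrm_def cd_def sum_subtractf by simp
  have "\<bar>\<Sum>k\<in>{1..N}. (\<bar>a k\<bar> + \<bar>b k\<bar>) - (\<bar>a' k\<bar> + \<bar>b' k\<bar>)\<bar> \<le> (\<Sum>k\<in>{1..N}. \<bar>(\<bar>a k\<bar> + \<bar>b k\<bar>) - (\<bar>a' k\<bar> + \<bar>b' k\<bar>)\<bar>)"
    by (rule sum_abs)
  also have "\<dots> \<le> (\<Sum>k\<in>{1..N}. \<bar>a k - a' k\<bar> + \<bar>b k - b' k\<bar>)"
  proof (rule sum_mono)
    fix k
    show "\<bar>(\<bar>a k\<bar> + \<bar>b k\<bar>) - (\<bar>a' k\<bar> + \<bar>b' k\<bar>)\<bar> \<le> \<bar>a k - a' k\<bar> + \<bar>b k - b' k\<bar>"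
      by linarith
  qed
  finally have s: "\<bar>\<Sum>k\<in>{1..N}. (\<bar>a k\<bar> + \<bar>b k\<bar>) - (\<bar>a' k\<bar> + \<bar>b' k\<bar>)\<bar> \<le> (\<Sum>k\<in>{1..N}. \<bar>a k - a' k\<bar> + \<bar>b k - b' k\<bar>)" .
  have z: "\<bar>\<bar>a 0\<bar> - \<bar>a' 0\<bar>\<bar> \<le> \<bar>a 0 - a' 0\<bar>" by linarith
  show ?thesis unfolding e cd_def using s z by linarith
qed

lemma nrm_coeff: "k \<le> N \<Longrightarrow> \<bar>a k\<bar> \<le> nrm N a b" "k \<in> {1..N} \<Longrightarrow> \<bar>b k\<bar> \<le> nrm N a b"
proof -
  have nn: "\<And>k. 0 \<le> \<bar>a k\<bar> + \<bar>b k\<bar>" by simp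
  { assume k: "k \<le> N"
    show "\<bar>a k\<bar> \<le> nrm N a b"
    proof (cases "k = 0")
      case True then show ?thesis unfolding nrm_def cd_def by (simp add: sum_nonneg)
    next
      case False
      then have "k \<in> {1..N}" using k by auto
      then have "\<bar>a k\<bar> + \<bar>b k\<bar> \<le> (\<Sum>k\<in>{1..N}. \<bar>a k\<bar> + \<bar>b k\<bar>)"
        by (intro member_le_sum) auto
      then show ?thesis unfolding nrm_def cd_def by simp
    qed }
  { assume k: "k \<in> {1..N}"
    then have "\<bar>a k\<bar> + \<bar>b k\<bar> \<le> (\<Sum>k\<in>{1..N}. \<bar>a k\<bar> + \<bar>b k\<bar>)"
      by (intro member_le_sum) auto
    then show "\<bar>b k\<bar> \<le> nrm N a b" unfolding nrm_def cd_def by simp }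
qed

lemma lmeas: assumes "continuous_on UNIV h" "A \<in> sets lebesgue" "bounded A" "{x. P x} \<in> sets borel"
  shows "{t\<in>A. P (h t)} \<in> lmeasurable"
proof -
  have hb: "h \<in> borel_measurable borel" using assms(1) by (rule borel_measurable_continuous_onI)
  have "h -` {x. P x} \<in> sets borel" using measurable_sets[OF hb assms(4)] by simp
  then have "h -` {x. P x} \<in> sets lebesgue" by (simp add: sets_lborel)
  then have "A \<inter> h -` {x. P x} \<in> sets lebesgue" using assms(2) by auto
  moreover have "{t\<in>A. P (h t)} = A \<inter> h -` {x. P x}" by auto
  ultimately show ?thesis using assms(3) bounded_set_imp_lmeasurable bounded_subset by (metis Int_lower1)
qed

lemma Ico_sets: "{a..<b::real} \<in> sets lebesgue"
  by (simp add: sets_lborel)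
lemma Icc_sets: "{a..b::real} \<in> sets lebesgue"
  by (simp add: sets_lborel)

lemma pos_meas: assumes "t0 \<in> {0..2*pi}" "open U" "t0 \<in> U" "S \<in> lmeasurable"
  "U \<inter> {0..<2*pi} \<subseteq> S"
  shows "mes S > 0"
proof -
  obtain e where e: "e > 0" "ball t0 e \<subseteq> U" using assms(2,3) open_contains_ball by blast
  define d where "d = min (e/2) (pi/2)"
  have d: "d > 0" "d < e" "d \<le> pi/2" unfolding d_def using e pi_gt_zero by auto
  obtain u v where uv: "u < v" "{u..v} \<subseteq> S"
  proof (cases "t0 \<le> pi")
    case True
    have "{t0..t0+d} \<subseteq> S"
    proof
      fix x assume x: "x \<in> {t0..t0+d}"
      then have "x \<in> ball t0 e" using d by (auto simp: dist_real_def)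
      moreover have "x \<in> {0..<2*pi}" using x True d assms(1) pi_gt_zero by auto
      ultimately show "x \<in> S" using e assms(5) by blast
    qed
    then show ?thesis using that[of t0 "t0+d"] d by auto
  next
    case False
    have "{t0-d..t0-d/2} \<subseteq> S"
    proof
      fix x assume x: "x \<in> {t0-d..t0-d/2}"
      then have "x \<in> ball t0 e" using d by (auto simp: dist_real_def)
      moreover have "x \<in> {0..<2*pi}" using x False d assms(1) pi_gt_zero by auto
      ultimately show "x \<in> S" using e assms(5) by blast
    qed
    then show ?thesis using that[of "t0-d" "t0-d/2"] d by auto
  qed
  have "mes {u..v} \<le> mes S" unfolding mes_def
    by (rule measure_mono_fmeasurable[OF uv(2)]) (auto simp: assms(4) sets_lborel)
  moreover have "mes {u..v} = v - u" unfolding mes_def using uv by simp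
  ultimately show ?thesis using uv by simp
qed

lemma bw_aux: fixes X :: "nat \<Rightarrow> nat \<Rightarrow> real" assumes "\<And>k i. i \<le> N \<Longrightarrow> \<bar>X k i\<bar> \<le> C" and MM: "M \<le> Suc N"
  shows "\<exists>r. strict_mono r \<and> (\<forall>i<M. convergent (\<lambda>k. X (r k) i))"
  using MM
proof (induction M)
  case 0
  show ?case by (rule exI[where x=id]) (auto simp: strict_mono_def)
next
  case (Suc M)
  then obtain r where r: "strict_mono r" "\<forall>i<M. convergent (\<lambda>k. X (r k) i)" by auto
  obtain r2 where r2: "strict_mono r2" "monoseq (\<lambda>k. X (r (r2 k)) M)"
    using seq_monosub[of "\<lambda>k. X (r k) M"] by auto
  have "Bseq (\<lambda>k. X (r (r2 k)) M)"
    by (intro BseqI'[of _ C]) (use assms(1) Suc.prems in auto)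
  then have cM: "convergent (\<lambda>k. X (r (r2 k)) M)" using r2(2) Bseq_monoseq_convergent by blast
  have "\<forall>i<Suc M. convergent (\<lambda>k. X ((r \<circ> r2) k) i)"
  proof (intro allI impI)
    fix i assume "i < Suc M"
    then consider "i < M" | "i = M" by linarith
    then show "convergent (\<lambda>k. X ((r \<circ> r2) k) i)"
    proof cases
      case 1
      then have "convergent ((\<lambda>k. X (r k) i) \<circ> r2)" using r(2) r2(1) convergent_subseq_convergent by blast
      then show ?thesis by (simp add: o_def)
    next
      case 2 then show ?thesis using cM by simp
    qed
  qed
  moreover have "strict_mono (r \<circ> r2)" using r(1) r2(1) strict_mono_o by blast
  ultimately show ?case by blast
qed

lemma bw: fixes A B :: "nat \<Rightarrow> nat \<Rightarrow> real" assumes "\<And>k i. i \<le> N \<Longrightarrow> \<bar>A k i\<bar> \<le> C" "\<And>k i. i \<le> N \<Longrightarrow> \<bar>B k i\<bar> \<le> C"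
  shows "\<exists>r a b. strict_mono r \<and> (\<lambda>k. cd N (A (r k)) (B (r k)) a b) \<longlonglongrightarrow> 0"
proof -
  obtain r1 where r1: "strict_mono r1" "\<forall>i<Suc N. convergent (\<lambda>k. A (r1 k) i)"
    using bw_aux[of N A C "Suc N"] assms(1) by auto
  obtain r2 where r2: "strict_mono r2" "\<forall>i<Suc N. convergent (\<lambda>k. B (r1 (r2 k)) i)"
    using bw_aux[of N "\<lambda>k. B (r1 k)" C "Suc N"] assms(2) by auto
  define r where "r = r1 \<circ> r2"
  have r: "strict_mono r" unfolding r_def using r1 r2 strict_mono_o by blast
  have ca: "convergent (\<lambda>k. A (r k) i)" if "i \<le> N" for i
  proof -
    have "convergent ((\<lambda>k. A (r1 k) i) \<circ> r2)" 
      by (intro convergent_subseq_convergent r2(1)) (use r1(2) that in auto)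
    then show ?thesis by (simp add: r_def o_def)
  qed
  have cb: "convergent (\<lambda>k. B (r k) i)" if "i \<le> N" for i
    using r2(2) that by (simp add: r_def)
  define a where "a i = lim (\<lambda>k. A (r k) i)" for i
  define b where "b i = lim (\<lambda>k. B (r k) i)" for i
  have la: "(\<lambda>k. \<bar>A (r k) i - a i\<bar>) \<longlonglongrightarrow> 0" if "i \<le> N" for i
    using ca[OF that] unfolding a_def convergent_LIMSEQ_iff
    by (intro tendsto_rabs_zero) (simp add: LIM_zero)
  have lb: "(\<lambda>k. \<bar>B (r k) i - b i\<bar>) \<longlonglongrightarrow> 0" if "i \<le> N" for i
    using cb[OF that] unfolding b_def convergent_LIMSEQ_iff
    by (intro tendsto_rabs_zero) (simp add: LIM_zero)
  have "(\<lambda>k. cd N (A (r k)) (B (r k)) a b) \<longlonglongrightarrow> 0 + (\<Sum>i\<in>{1..N}. 0 + 0)"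
    unfolding cd_def
    by (intro tendsto_add tendsto_sum la lb) auto
  then show ?thesis using r by auto
qed

lemma cs_id: "(complex_of_real x - \<i> * complex_of_real y)/2 * (Complex C S * Complex C S) + (complex_of_real x + \<i> * complex_of_real y)/2
        = Complex C S * complex_of_real (x * C + y * S)" if "S^2 + C^2 = 1"
proof (rule complex_eqI)
  show "Re ((complex_of_real x - \<i> * complex_of_real y)/2 * (Complex C S * Complex C S) + (complex_of_real x + \<i> * complex_of_real y)/2) =
    Re (Complex C S * complex_of_real (x * C + y * S))" using that by simp algebra
  show "Im ((complex_of_real x - \<i> * complex_of_real y)/2 * (Complex C S * Complex C S) + (complex_of_real x + \<i> * complex_of_real y)/2) =
    Im (Complex C S * complex_of_real (x * C + y * S))" using that by simp algebra
qed

lemma term_eq: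
  fixes x y t :: real
  assumes "k \<le> N"
  shows "(complex_of_real x - \<i> * complex_of_real y)/2 * cis t ^ (N+k) + (complex_of_real x + \<i> * complex_of_real y)/2 * cis t ^ (N-k)
        = cis t ^ N * complex_of_real (x * cos (real k * t) + y * sin (real k * t))"
proof -
  define w where "w = cis t ^ (N-k)"
  define c where "c = cis t ^ k"
  have 1: "cis t ^ (N+k) = w * c * c" unfolding w_def c_def using assms
    by (metis add.commute le_add_diff_inverse power_add mult.assoc)
  have 2: "cis t ^ N = w * c" unfolding w_def c_def using assms
    by (metis le_add_diff_inverse2 power_add)
  have c: "c = cis (real k * t)" unfolding c_def by (rule Complex.DeMoivre)
  have key: "(complex_of_real x - \<i> * complex_of_real y)/2 * (c * c) + (complex_of_real x + \<i> * complex_of_real y)/2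
        = c * complex_of_real (x * cos (real k * t) + y * sin (real k * t))"
    unfolding c cis.code by (rule cs_id) simp
  have "(complex_of_real x - \<i> * complex_of_real y)/2 * (w * c * c) + (complex_of_real x + \<i> * complex_of_real y)/2 * w
     = w * ((complex_of_real x - \<i> * complex_of_real y)/2 * (c * c) + (complex_of_real x + \<i> * complex_of_real y)/2)"
    by (simp only: distrib_left mult.assoc mult.commute mult.left_commute)
  also have "\<dots> = w * c * complex_of_real (x * cos (real k * t) + y * sin (real k * t))"
    unfolding key by (simp only: mult.assoc)
  finally show ?thesis unfolding 1 2 w_def[symmetric] .
qed

definition tpoly :: "nat \<Rightarrow> (nat\<Rightarrow>real) \<Rightarrow> (nat\<Rightarrow>real) \<Rightarrow> complex poly" where
  "tpoly N a b = monom (complex_of_real (a 0)) N + (\<Sum>k\<in>{1..N}.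
     monom ((complex_of_real (a k) - \<i> * complex_of_real (b k))/2) (N+k)
   + monom ((complex_of_real (a k) + \<i> * complex_of_real (b k))/2) (N-k))"

lemma tpoly_eval: "poly (tpoly N a b) (cis t) = cis t ^ N * complex_of_real (tp N a b t)"
proof -
  have "poly (tpoly N a b) (cis t) = complex_of_real (a 0) * cis t ^ N + (\<Sum>k\<in>{1..N}.
     (complex_of_real (a k) - \<i> * complex_of_real (b k))/2 * cis t ^ (N+k)
   + (complex_of_real (a k) + \<i> * complex_of_real (b k))/2 * cis t ^ (N-k))"
    unfolding tpoly_def by (simp add: poly_sum poly_monom)
  also have "\<dots> = complex_of_real (a 0) * cis t ^ N + (\<Sum>k\<in>{1..N}.
     cis t ^ N * complex_of_real (a k * cos (real k * t) + b k * sin (real k * t)))"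
    by (intro arg_cong2[where f="(+)"] refl sum.cong term_eq) auto
  also have "\<dots> = cis t ^ N * complex_of_real (tp N a b t)"
    by (simp add: tp_def sum_distrib_left distrib_left mult.commute)
  finally show ?thesis .
qed

lemma tpoly_coeff0: "coeff (tpoly N a b) N = complex_of_real (a 0)"
proof -
  have "\<forall>k\<in>{1..N}. coeff (monom ((complex_of_real (a k) - \<i> * complex_of_real (b k))/2) (N+k)
   + monom ((complex_of_real (a k) + \<i> * complex_of_real (b k))/2) (N-k)) N = 0"
    by (auto simp: coeff_monom)
  then show ?thesis unfolding tpoly_def coeff_add coeff_sum by simp
qed

lemma tpoly_coeff1: assumes "j \<in> {1..N}"
  shows "coeff (tpoly N a b) (N+j) = (complex_of_real (a j) - \<i> * complex_of_real (b j))/2"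
proof -
  have "(\<Sum>k\<in>{1..N}. coeff (monom ((complex_of_real (a k) - \<i> * complex_of_real (b k))/2) (N+k)
   + monom ((complex_of_real (a k) + \<i> * complex_of_real (b k))/2) (N-k)) (N+j))
   = (\<Sum>k\<in>{1..N}. if k = j then (complex_of_real (a k) - \<i> * complex_of_real (b k))/2 else 0)"
    using assms by (intro sum.cong refl) (auto simp: coeff_monom)
  also have "\<dots> = (complex_of_real (a j) - \<i> * complex_of_real (b j))/2"
    using assms by (simp add: sum.delta)
  finally show ?thesis using assms unfolding tpoly_def coeff_add coeff_sum by (simp add: coeff_monom)
qed

lemma inj_cis: "inj_on cis {0..<2*pi}"
proof (rule inj_onI)
  fix s t assume s: "s \<in> {0..<2*pi}" and t: "t \<in> {0..<2*pi}" and e: "cis s = cis t"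
  have "sin s = sin t \<and> cos s = cos t"
    using arg_cong[OF e, of Re] arg_cong[OF e, of Im] by simp
  then obtain n :: int where n: "s = t + 2 * pi * n" using sin_cos_eq_iff by blast
  have st: "0 \<le> t" "t < 2*pi" "0 \<le> s" "s < 2*pi" using s t by auto
  have "2 * pi * n < 2 * pi * 1" using st n by linarith
  then have "real_of_int n < 1" using mult_less_cancel_left_pos[of "2*pi" "real_of_int n" 1] by simp
  moreover have "2 * pi * (-1) < 2 * pi * n" using st n by linarith
  then have "-1 < real_of_int n" using mult_less_cancel_left_pos[of "2*pi" "-1" "real_of_int n"] by simp
  ultimately have "n = 0" by linarith
  then show "s = t" using n by simp
qed

lemma tp_zeros_finite: assumes "nrm N a b \<noteq> 0" shows "finite {t\<in>{0..<2*pi}. tp N a b t = 0}"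
proof -
  have P0: "tpoly N a b \<noteq> 0"
  proof
    assume P: "tpoly N a b = 0"
    have a0: "a 0 = 0" using tpoly_coeff0[of N a b] P by simp
    have ab: "a k = 0 \<and> b k = 0" if "k \<in> {1..N}" for k
    proof -
      have "(complex_of_real (a k) - \<i> * complex_of_real (b k))/2 = (0::complex)"
        using tpoly_coeff1[OF that, of a b] P by simp
      then show ?thesis by (simp add: complex_eq_iff)
    qed
    have "nrm N a b = 0" unfolding nrm_def cd_def using a0 ab by simp
    then show False using assms by simp
  qed
  have fin: "finite {z. poly (tpoly N a b) z = 0}" by (rule poly_roots_finite[OF P0])
  have "cis ` {t\<in>{0..<2*pi}. tp N a b t = 0} \<subseteq> {z. poly (tpoly N a b) z = 0}"
    by (auto simp: tpoly_eval)
  then have "finite (cis ` {t\<in>{0..<2*pi}. tp N a b t = 0})" using fin finite_subset by blast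
  moreover have "inj_on cis {t\<in>{0..<2*pi}. tp N a b t = 0}"
    using inj_cis by (rule inj_on_subset) auto
  ultimately show ?thesis using finite_imageD by blast
qed

lemma borel_le: "{x::real. \<bar>x\<bar> \<le> c} \<in> sets borel"
  by (rule borel_closed) (intro closed_Collect_le continuous_intros)

lemma remez: assumes "\<delta> > 0"
  shows "\<exists>C. \<forall>a b. \<delta> \<le> mes {t\<in>{0..2*pi}. \<bar>tp N a b t\<bar> \<le> 1} \<longrightarrow> nrm N a b \<le> C"
proof (rule ccontr)
  assume "\<not> ?thesis"
  then have "\<forall>k::nat. \<exists>a b. \<delta> \<le> mes {t\<in>{0..2*pi}. \<bar>tp N a b t\<bar> \<le> 1} \<and> real k + 1 < nrm N a b"
    by (meson not_le)
  then obtain A0 B0 where AB: "\<And>k. \<delta> \<le> mes {t\<in>{0..2*pi}. \<bar>tp N (A0 k) (B0 k) t\<bar> \<le> 1}"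
    "\<And>k. real k + 1 < nrm N (A0 k) (B0 k)"
    by metis
  define S where "S k = nrm N (A0 k) (B0 k)" for k
  have Spos: "S k > real k + 1" for k unfolding S_def using AB(2) by simp
  define A where "A k i = A0 k i / S k" for k i
  define B where "B k i = (if i = 0 then 0 else B0 k i / S k)" for k i
  have tpAB: "tp N (A k) (B k) t = tp N (A0 k) (B0 k) t / S k" for k t
  proof -
    have eB: "B k = (\<lambda>i. (1 / S k) * B0 k i)(0:=0)" unfolding B_def by auto
    have eA: "A k = (\<lambda>i. (1 / S k) * A0 k i)" unfolding A_def by auto
    show ?thesis unfolding eA eB tp_b0 tp_scale by simp
  qed
  have nrmAB: "nrm N (A k) (B k) = 1" for k
  proof -
    have Sk: "\<bar>S k\<bar> = S k" using Spos[of k] by simp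
    have "nrm N (A k) (B k) = nrm N (A0 k) (B0 k) / S k"
      unfolding nrm_def cd_def A_def B_def
      by (simp add: abs_divide add_divide_distrib sum_divide_distrib Sk)
    then show ?thesis using Spos[of k] unfolding S_def by simp
  qed
  have bA: "\<bar>A k i\<bar> \<le> 1" if "i \<le> N" for k i using nrm_coeff(1)[OF that, of "A k" "B k"] nrmAB by simp
  have bB: "\<bar>B k i\<bar> \<le> 1" if "i \<le> N" for k i
  proof (cases "i = 0")
    case True then show ?thesis unfolding B_def by simp
  next
    case False then have "i \<in> {1..N}" using that by auto
    then show ?thesis using nrm_coeff(2)[of i N "B k" "A k"] nrmAB by simp
  qed
  obtain r a b where r: "strict_mono r" and lim: "(\<lambda>k. cd N (A (r k)) (B (r k)) a b) \<longlonglongrightarrow> 0"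
    using bw[of N A 1 B] bA bB by blast
  have "\<bar>1 - nrm N a b\<bar> \<le> 0"
  proof (rule LIMSEQ_le_const[OF lim])
    show "\<exists>M. \<forall>n\<ge>M. \<bar>1 - nrm N a b\<bar> \<le> cd N (A (r n)) (B (r n)) a b"
    proof (intro exI allI impI)
      fix n :: nat
      show "\<bar>1 - nrm N a b\<bar> \<le> cd N (A (r n)) (B (r n)) a b"
        using nrm_diff[of N "A (r n)" "B (r n)" a b] nrmAB[of "r n"] by simp
    qed
  qed
  then have n1: "nrm N a b = 1" by simp
  have finZ: "finite {t\<in>{0..<2*pi}. tp N a b t = 0}" using tp_zeros_finite n1 by simp
  define Z where "Z = {t\<in>{0..2*pi}. tp N a b t = 0}"
  have "Z \<subseteq> insert (2*pi) {t\<in>{0..<2*pi}. tp N a b t = 0}" unfolding Z_def by auto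
  then have "finite Z" using finZ finite_subset by blast
  then have mZ: "mes Z = 0" unfolding mes_def using negligible_finite negligible_imp_measure0 by blast
  define Sj where "Sj j = {t\<in>{0..2*pi}. \<bar>tp N a b t\<bar> \<le> 1 / (real j + 1)}" for j
  have Sjm: "Sj j \<in> lmeasurable" for j unfolding Sj_def
    by (intro lmeas[where P="\<lambda>x. \<bar>x\<bar> \<le> 1 / (real j + 1)"] tp_cont borel_le Icc_sets) auto
  have dec: "decseq Sj"
  proof (rule decseq_SucI)
    fix j
    have "1 / (real (Suc j) + 1) \<le> 1 / (real j + 1)" by (simp add: frac_le)
    then show "Sj (Suc j) \<subseteq> Sj j" unfolding Sj_def by auto
  qed
  have "(\<Inter>j. Sj j) \<subseteq> Z"
  proof
    fix t assume t: "t \<in> (\<Inter>j. Sj j)"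
    then have t02: "t \<in> {0..2*pi}" unfolding Sj_def by auto
    have "\<bar>tp N a b t\<bar> \<le> 0"
    proof (rule field_le_epsilon)
      fix e :: real assume e: "e > 0"
      obtain j :: nat where j: "1 / e < real j" using reals_Archimedean2 by blast
      have "1 / (real j + 1) < e" using j e
        by (smt (verit, ccfv_SIG) divide_less_eq mult.commute zero_less_divide_1_iff)
      moreover have "\<bar>tp N a b t\<bar> \<le> 1 / (real j + 1)" using t unfolding Sj_def by auto
      ultimately show "\<bar>tp N a b t\<bar> \<le> 0 + e" by simp
    qed
    then show "t \<in> Z" unfolding Z_def using t02 by simp
  qed
  moreover have "Z \<subseteq> (\<Inter>j. Sj j)" unfolding Z_def Sj_def by auto
  ultimately have IZ: "(\<Inter>j. Sj j) = Z" by blast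
  have "(\<lambda>j. measure lebesgue (Sj j)) \<longlonglongrightarrow> measure lebesgue (\<Inter>j. Sj j)"
  proof (rule Lim_measure_decseq)
    show "range Sj \<subseteq> sets lebesgue" using Sjm by auto
    show "decseq Sj" by (rule dec)
    show "emeasure lebesgue (Sj i) \<noteq> \<infinity>" for i using fmeasurableD2[OF Sjm[of i]] by simp
  qed
  then have "(\<lambda>j. mes (Sj j)) \<longlonglongrightarrow> 0" using IZ mZ unfolding mes_def by simp
  then obtain j where j: "mes (Sj j) < \<delta>"
    using assms by (metis (no_types, lifting) eventually_at_top_linorder order_tendstoD(2) order_refl)
  define e where "e = 1 / (2 * (real j + 1))"
  have e: "e > 0" unfolding e_def by simp
  have "\<forall>\<^sub>F k in sequentially. cd N (A (r k)) (B (r k)) a b < e"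
    using lim e by (rule order_tendstoD(2))
  moreover have "\<forall>\<^sub>F k in sequentially. 2 * (real j + 1) \<le> real k"
    by (rule eventually_sequentiallyI[of "2 * (j+1)"]) simp
  ultimately have "\<forall>\<^sub>F k in sequentially. cd N (A (r k)) (B (r k)) a b < e \<and> 2 * (real j + 1) \<le> real k"
    by (rule eventually_conj)
  then obtain M where "\<forall>k\<ge>M. cd N (A (r k)) (B (r k)) a b < e \<and> 2 * (real j + 1) \<le> real k"
    unfolding eventually_sequentially by blast
  then obtain k where k: "cd N (A (r k)) (B (r k)) a b < e" "2 * (real j + 1) \<le> real k" by blast
  have rk: "real k \<le> real (r k)" using seq_suble[OF r, of k] by simp
  have Sbig: "S (r k) \<ge> 2 * (real j + 1)" using Spos[of "r k"] k(2) rk by linarith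
  define T where "T = {t\<in>{0..2*pi}. \<bar>tp N (A0 (r k)) (B0 (r k)) t\<bar> \<le> 1}"
  have Tm: "T \<in> lmeasurable" unfolding T_def
    by (intro lmeas[where P="\<lambda>x. \<bar>x\<bar> \<le> 1"] tp_cont borel_le Icc_sets) auto
  have "T \<subseteq> Sj j"
  proof
    fix t assume t: "t \<in> T"
    have Sp: "S (r k) > 0" using Sbig by (smt (verit) of_nat_0_le_iff)
    have "\<bar>tp N (A (r k)) (B (r k)) t\<bar> = \<bar>tp N (A0 (r k)) (B0 (r k)) t\<bar> / S (r k)"
      using tpAB Sp by simp
    also have "\<dots> \<le> 1 / S (r k)" using t Sp unfolding T_def by (simp add: divide_right_mono)
    also have "\<dots> \<le> e" unfolding e_def using Sbig Sp by (simp add: frac_le)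
    finally have 1: "\<bar>tp N (A (r k)) (B (r k)) t\<bar> \<le> e" .
    have "\<bar>tp N a b t\<bar> \<le> \<bar>tp N (A (r k)) (B (r k)) t\<bar> + \<bar>tp N (A (r k)) (B (r k)) t - tp N a b t\<bar>"
      by linarith
    also have "\<dots> \<le> e + e" using 1 tp_diff[of N "A (r k)" "B (r k)" t a b] k(1) by linarith
    also have "\<dots> = 1 / (real j + 1)" unfolding e_def by (simp add: field_simps)
    finally show "t \<in> Sj j" using t unfolding T_def Sj_def by auto
  qed
  then have "mes T \<le> mes (Sj j)" unfolding mes_def
    using Tm Sjm by (intro measure_mono_fmeasurable) auto
  moreover have "\<delta> \<le> mes T" unfolding T_def by (rule AB(1))
  ultimately show False using j by simp
qed

definition L :: "nat \<Rightarrow> real \<Rightarrow> (nat\<Rightarrow>real) \<Rightarrow> (nat\<Rightarrow>real) \<Rightarrow> real \<Rightarrow> real" where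
  "L n y a b t = y * cos (real n * t) + tp (n-1) a b t"

lemma lead_iff: "f \<in> trig_polys_lead n y \<longleftrightarrow> (\<exists>a b. f = L n y a b)"
  unfolding trig_polys_lead_def trig_polys_iff L_def[abs_def] by auto

lemma L_cont: "continuous_on S (L n y a b)"
  unfolding L_def[abs_def] by (intro continuous_intros tp_cont)

lemma L_tp: assumes "n \<ge> 1" shows "L n y a b t = tp n (a(n:=y)) (b(n:=0)) t"
proof -
  have I: "{1..n} = insert n {1..n-1}" using assms by auto
  have "(\<Sum>k\<in>{1..n-1}. (a(n:=y)) k * cos (real k * t) + (b(n:=0)) k * sin (real k * t))
      = (\<Sum>k\<in>{1..n-1}. a k * cos (real k * t) + b k * sin (real k * t))"
    by (intro sum.cong) auto
  then show ?thesis unfolding L_def tp_def I using assms by (simp add: sum.insert)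
qed

lemma torus_lm: "{t\<in>torus. P (h t)} \<in> lmeasurable" if "continuous_on UNIV h" "{x. P x} \<in> sets borel"
  unfolding torus_def by (rule lmeas[OF that(1) Ico_sets _ that(2)]) simp

lemma borel_gen: "{x::real. c \<le> x} \<in> sets borel" "{x::real. x < c} \<in> sets borel"
  "{x::real. c \<le> \<bar>x\<bar>} \<in> sets borel" "{x::real. \<bar>x\<bar> < c} \<in> sets borel"
  "{x::real. c < \<bar>x\<bar> \<and> \<bar>x\<bar> < d} \<in> sets borel"
proof -
  show "{x::real. c \<le> x} \<in> sets borel"
    by (rule borel_closed) (intro closed_Collect_le continuous_intros)
  show "{x::real. x < c} \<in> sets borel"
    by (rule borel_open) (intro open_Collect_less continuous_intros)
  show "{x::real. c \<le> \<bar>x\<bar>} \<in> sets borel"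
    by (rule borel_closed) (intro closed_Collect_le continuous_intros)
  show "{x::real. \<bar>x\<bar> < c} \<in> sets borel"
    by (rule borel_open) (intro open_Collect_less continuous_intros)
  show "{x::real. c < \<bar>x\<bar> \<and> \<bar>x\<bar> < d} \<in> sets borel"
    by (rule borel_open) (intro open_Collect_conj open_Collect_less continuous_intros)
qed

lemma lm_fin: "A \<in> lmeasurable \<Longrightarrow> emeasure lebesgue A \<noteq> \<infinity>"
  by (metis fmeasurableD2 infinity_ennreal_def)

lemma mes_Un: "A \<in> lmeasurable \<Longrightarrow> B \<in> lmeasurable \<Longrightarrow> A \<inter> B = {} \<Longrightarrow> mes (A \<union> B) = mes A + mes B"
  unfolding mes_def by (rule measure_Union[OF lm_fin lm_fin fmeasurableD fmeasurableD])

lemma mes_mono: "A \<subseteq> B \<Longrightarrow> A \<in> sets lebesgue \<Longrightarrow> B \<in> lmeasurable \<Longrightarrow> mes A \<le> mes B"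
  unfolding mes_def by (rule measure_mono_fmeasurable)

lemma compl: fixes h :: "real \<Rightarrow> real" assumes "continuous_on UNIV h"
  shows "mes {t\<in>torus. c \<le> h t} + mes {t\<in>torus. h t < c} = 2*pi"
proof -
  have 1: "{t\<in>torus. c \<le> h t} \<in> lmeasurable"
    by (rule torus_lm[where P="\<lambda>x. c \<le> x", OF assms borel_gen(1)])
  have 2: "{t\<in>torus. h t < c} \<in> lmeasurable"
    by (rule torus_lm[where P="\<lambda>x. x < c", OF assms borel_gen(2)])
  have "mes ({t\<in>torus. c \<le> h t} \<union> {t\<in>torus. h t < c}) = mes {t\<in>torus. c \<le> h t} + mes {t\<in>torus. h t < c}"
    by (rule mes_Un[OF 1 2]) auto
  moreover have "{t\<in>torus. c \<le> h t} \<union> {t\<in>torus. h t < c} = {0..<2*pi}" unfolding torus_def by auto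
  ultimately show ?thesis unfolding mes_def by simp
qed

lemma cis_ne1: assumes "0 < th" "th < 2*pi" shows "cis th \<noteq> 1"
proof
  assume "cis th = 1"
  then have "cis th = cis 0" by simp
  then have "th = 0" using inj_cis assms unfolding inj_on_def by fastforce
  then show False using assms by simp
qed

lemma geo0: assumes "0 < m" "m < 2*n"
  shows "(\<Sum>j<2*n. cis (real j * (real m * pi / real n))) = 0"
proof -
  have n: "n > 0" using assms by simp
  define x where "x = cis (real m * pi / real n)"
  have "0 < real m * pi / real n" using assms n by simp
  moreover have "real m * pi / real n < 2 * pi"
  proof -
    have "real m < 2 * real n" using assms by simp
    then have "real m * pi < 2 * real n * pi" by simp
    then show ?thesis using n by (simp add: divide_less_eq mult.commute mult.left_commute)
  qed
  ultimately have x1: "x \<noteq> 1" unfolding x_def by (rule cis_ne1)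
  have "x ^ (2*n) = cis (real (2*n) * (real m * pi / real n))" unfolding x_def by (rule Complex.DeMoivre)
  also have "real (2*n) * (real m * pi / real n) = 2 * real m * pi" using n by simp
  also have "cis (2 * real m * pi) = 1" by (simp add: cis.code complex_eq_iff)
  finally have "x ^ (2*n) = 1" .
  then have "(\<Sum>j<2*n. x ^ j) = 0" using geometric_sum[OF x1] by simp
  moreover have "x ^ j = cis (real j * (real m * pi / real n))" for j unfolding x_def by (rule Complex.DeMoivre)
  ultimately show ?thesis by simp
qed

lemma alt_sums: assumes "k < n"
  shows "(\<Sum>j<2*n. (-1)^j * cos (real k * (real j * pi / real n))) = 0"
        "(\<Sum>j<2*n. (-1)^j * sin (real k * (real j * pi / real n))) = 0"
proof -
  have n: "n > 0" using assms by simp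
  have e: "real j * (real (n+k) * pi / real n) = real j * pi + real k * (real j * pi / real n)" for j
    using n by (simp add: field_simps)
  have c: "(-1)^j * cos (real k * (real j * pi / real n)) = cos (real j * (real (n+k) * pi / real n))" for j
    unfolding e cos_add by simp
  have s: "(-1)^j * sin (real k * (real j * pi / real n)) = sin (real j * (real (n+k) * pi / real n))" for j
    unfolding e sin_add by simp
  have g: "(\<Sum>j<2*n. cis (real j * (real (n+k) * pi / real n))) = 0"
    using assms by (intro geo0) auto
  show "(\<Sum>j<2*n. (-1)^j * cos (real k * (real j * pi / real n))) = 0"
    unfolding c using arg_cong[OF g, of Re] by (simp add: Re_sum)
  show "(\<Sum>j<2*n. (-1)^j * sin (real k * (real j * pi / real n))) = 0"
    unfolding s using arg_cong[OF g, of Im] by (simp add: Im_sum)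
qed

lemma ortho: assumes "n \<ge> 1" shows "\<exists>t\<in>{0..<2*pi}. \<bar>y\<bar> \<le> \<bar>L n y a b t\<bar>"
proof (rule ccontr)
  assume "\<not> ?thesis"
  then have lt: "\<And>t. t \<in> {0..<2*pi} \<Longrightarrow> \<bar>L n y a b t\<bar> < \<bar>y\<bar>" by (meson not_le)
  define tj where "tj j = real j * pi / real n" for j
  have tjin: "tj j \<in> {0..<2*pi}" if "j < 2*n" for j
  proof -
    have "real j < 2 * real n" using that by simp
    then have "real j * pi < 2 * real n * pi" by simp
    then show ?thesis unfolding tj_def using assms by (simp add: divide_less_eq mult.commute mult.left_commute)
  qed
  have e1: "(-1)^j * L n y a b (tj j) = y * ((-1)^j * cos (real n * tj j)) + a 0 * ((-1)^j * cos (real 0 * tj j))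
     + (\<Sum>k\<in>{1..n-1}. a k * ((-1)^j * cos (real k * tj j)) + b k * ((-1)^j * sin (real k * tj j)))" for j
    unfolding L_def tp_def by (simp add: sum_distrib_left algebra_simps)
  have "(\<Sum>j<2*n. (-1)^j * L n y a b (tj j)) = y * (\<Sum>j<2*n. (-1)^j * cos (real n * tj j)) + a 0 * (\<Sum>j<2*n. (-1)^j * cos (real 0 * tj j))
     + (\<Sum>k\<in>{1..n-1}. a k * (\<Sum>j<2*n. (-1)^j * cos (real k * tj j)) + b k * (\<Sum>j<2*n. (-1)^j * sin (real k * tj j)))"
    unfolding e1 sum.distrib sum_distrib_left by (simp add: sum.swap[of _ "{..<2*n}"])
  also have "(\<Sum>j<2*n. (-1)^j * cos (real n * tj j)) = 2 * real n"
  proof -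
    have "(-1)^j * cos (real n * tj j) = 1" for j
    proof -
      have "real n * tj j = real j * pi" unfolding tj_def using assms by simp
      then show ?thesis by (simp flip: power_mult_distrib)
    qed
    then show ?thesis by simp
  qed
  also have "(\<Sum>j<2*n. (-1)^j * cos (real 0 * tj j)) = 0"
    using alt_sums(1)[of 0 n] assms unfolding tj_def by simp
  also have "(\<Sum>k\<in>{1..n-1}. a k * (\<Sum>j<2*n. (-1)^j * cos (real k * tj j)) + b k * (\<Sum>j<2*n. (-1)^j * sin (real k * tj j))) = 0"
    using alt_sums[of _ n] unfolding tj_def by (intro sum.neutral) auto
  finally have S: "(\<Sum>j<2*n. (-1)^j * L n y a b (tj j)) = 2 * real n * y" by simp
  have "2 * real n * \<bar>y\<bar> = \<bar>\<Sum>j<2*n. (-1)^j * L n y a b (tj j)\<bar>" unfolding S by (simp add: abs_mult)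
  also have "\<dots> \<le> (\<Sum>j<2*n. \<bar>(-1)^j * L n y a b (tj j)\<bar>)" by (rule sum_abs)
  also have "\<dots> = (\<Sum>j<2*n. \<bar>L n y a b (tj j)\<bar>)" by (simp add: abs_mult)
  also have "\<dots> < (\<Sum>j<2*n. \<bar>y\<bar>)"
  proof (rule sum_strict_mono)
    show "{..<2*n} \<noteq> {}" using assms by (simp add: lessThan_empty_iff)
  qed (use lt tjin in auto)
  also have "\<dots> = 2 * real n * \<bar>y\<bar>" by simp
  finally show False by simp
qed

lemma L_b0: "L n y a (b(0:=c)) = L n y a b"
  unfolding L_def[abs_def] tp_b0 ..

lemma mu_nonneg: "0 \<le> mu f" unfolding mu_def mes_def by (rule measure_nonneg)
lemma sig_le: "sigma_n n y \<le> mu (L n y a b)"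
proof -
  have "L n y a b \<in> trig_polys_lead n y" unfolding lead_iff by blast
  then have 1: "mu (L n y a b) \<in> mu ` trig_polys_lead n y" by (rule imageI)
  have 2: "bdd_below (mu ` trig_polys_lead n y)" by (rule bdd_belowI[of _ 0]) (auto intro: mu_nonneg)
  show ?thesis unfolding sigma_n_def by (rule cInf_lower[OF 1 2])
qed
lemma sig_less: assumes "sigma_n n y < z" shows "\<exists>a b. mu (L n y a b) < z"
proof -
  have "L n y a b \<in> trig_polys_lead n y" for a b unfolding lead_iff by blast
  then have ne: "mu ` trig_polys_lead n y \<noteq> {}" by blast
  obtain x where x: "x \<in> mu ` trig_polys_lead n y" "x < z"
    using cInf_lessD[OF ne assms[unfolded sigma_n_def]] by blast
  then obtain f where "f \<in> trig_polys_lead n y" "mu f < z" by blast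
  then show ?thesis unfolding lead_iff by blast
qed

lemma tp_zero: "tp N (\<lambda>_. 0) (\<lambda>_. 0) t = 0" unfolding tp_def by simp

lemma absL_cont: "continuous_on UNIV (\<lambda>t. \<bar>L n y a b t\<bar>)"
  by (intro continuous_intros L_cont)

lemma sig_lt: assumes "n \<ge> 1" shows "sigma_n n y < 2*pi"
proof -
  define f where "f = L n y (\<lambda>_. 0) (\<lambda>_. 0)"
  define t0 where "t0 = pi / (2 * real n)"
  have ft0: "f t0 = 0" unfolding f_def L_def t0_def tp_zero using assms by simp
  have t0in: "t0 \<in> {0..2*pi}" unfolding t0_def using assms pi_gt_zero
    by (auto simp: field_simps)
  have D: "{t\<in>torus. \<bar>f t\<bar> < 1} \<in> lmeasurable"
    unfolding f_def by (rule torus_lm[where P="\<lambda>x. \<bar>x\<bar> < 1", OF L_cont borel_gen(4)])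
  have "mes {t\<in>torus. \<bar>f t\<bar> < 1} > 0"
  proof (rule pos_meas[OF t0in _ _ D])
    show "open {t. \<bar>f t\<bar> < 1}" unfolding f_def by (intro open_Collect_less continuous_intros L_cont)
    show "t0 \<in> {t. \<bar>f t\<bar> < 1}" using ft0 by simp
    show "{t. \<bar>f t\<bar> < 1} \<inter> {0..<2 * pi} \<subseteq> {t \<in> torus. \<bar>f t\<bar> < 1}" unfolding torus_def by auto
  qed
  moreover have "mes {t\<in>torus. 1 \<le> \<bar>f t\<bar>} + mes {t\<in>torus. \<bar>f t\<bar> < 1} = 2*pi"
    unfolding f_def by (rule compl[OF absL_cont])
  ultimately have "mu f < 2*pi" unfolding mu_def by linarith
  moreover have "sigma_n n y \<le> mu f" unfolding f_def by (rule sig_le)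
  ultimately show ?thesis by linarith
qed

lemma L_diff: "\<bar>L n y a b t - L n y a' b' t\<bar> \<le> cd (n-1) a b a' b'"
  unfolding L_def using tp_diff[of "n-1" a b t a' b'] by simp

lemma minim: assumes n: "n \<ge> 1"
  shows "\<exists>a b. \<forall>\<eta>>0. mes {t\<in>torus. 1 + \<eta> \<le> \<bar>L n y a b t\<bar>} \<le> sigma_n n y"
proof -
  define s where "s = sigma_n n y"
  define \<delta> where "\<delta> = (2*pi - s) / 2"
  have \<delta>: "\<delta> > 0" unfolding \<delta>_def s_def using sig_lt[OF n] by simp
  have "\<forall>k::nat. \<exists>a b. mu (L n y a b) < s + min \<delta> (1 / (real k + 1))"
  proof
    fix k :: nat
    have "s < s + min \<delta> (1 / (real k + 1))" using \<delta> by simp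
    then show "\<exists>a b. mu (L n y a b) < s + min \<delta> (1 / (real k + 1))" unfolding s_def by (rule sig_less)
  qed
  then obtain A B0 where AB0: "\<And>k. mu (L n y (A k) (B0 k)) < s + min \<delta> (1 / (real k + 1))" by metis
  define B where "B k = (B0 k)(0:=0)" for k
  have AB: "mu (L n y (A k) (B k)) < s + min \<delta> (1 / (real k + 1))" for k
    unfolding B_def L_b0 by (rule AB0)
  obtain C where C: "\<And>a b. \<delta> \<le> mes {t\<in>{0..2*pi}. \<bar>tp n a b t\<bar> \<le> 1} \<Longrightarrow> nrm n a b \<le> C"
    using remez[OF \<delta>, of n] by blast
  have nC: "nrm n ((A k)(n:=y)) ((B k)(n:=0)) \<le> C" for k
  proof (rule C)
    let ?f = "L n y (A k) (B k)"
    have m1: "{t\<in>torus. \<bar>?f t\<bar> < 1} \<in> lmeasurable"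
      by (rule torus_lm[where P="\<lambda>x. \<bar>x\<bar> < 1", OF L_cont borel_gen(4)])
    have m2: "{t\<in>{0..2*pi}. \<bar>tp n ((A k)(n:=y)) ((B k)(n:=0)) t\<bar> \<le> 1} \<in> lmeasurable"
      by (rule lmeas[where P="\<lambda>x. \<bar>x\<bar> \<le> 1", OF tp_cont Icc_sets _ borel_le]) simp
    have sub: "{t\<in>torus. \<bar>?f t\<bar> < 1} \<subseteq> {t\<in>{0..2*pi}. \<bar>tp n ((A k)(n:=y)) ((B k)(n:=0)) t\<bar> \<le> 1}"
      unfolding torus_def using L_tp[OF n] by auto
    have "mes {t\<in>torus. 1 \<le> \<bar>?f t\<bar>} + mes {t\<in>torus. \<bar>?f t\<bar> < 1} = 2*pi"
      by (rule compl[OF absL_cont])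
    moreover have "mes {t\<in>torus. 1 \<le> \<bar>?f t\<bar>} < s + \<delta>" using AB[of k] unfolding mu_def by linarith
    moreover have "2 * \<delta> = 2*pi - s" unfolding \<delta>_def by simp
    ultimately have "\<delta> < mes {t\<in>torus. \<bar>?f t\<bar> < 1}" by linarith
    also have "\<dots> \<le> mes {t\<in>{0..2*pi}. \<bar>tp n ((A k)(n:=y)) ((B k)(n:=0)) t\<bar> \<le> 1}"
      by (rule mes_mono[OF sub fmeasurableD[OF m1] m2])
    finally show "\<delta> \<le> mes {t\<in>{0..2*pi}. \<bar>tp n ((A k)(n:=y)) ((B k)(n:=0)) t\<bar> \<le> 1}" by simp
  qed
  have bA: "\<bar>A k i\<bar> \<le> C" if "i \<le> n-1" for k i
  proof -
    have i: "i \<noteq> n" "i \<le> n" using that n by auto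
    have "\<bar>((A k)(n:=y)) i\<bar> \<le> C" using nrm_coeff(1)[OF i(2), of "(A k)(n:=y)" "(B k)(n:=0)"] nC[of k] by linarith
    then show ?thesis using i by simp
  qed
  have bB: "\<bar>B k i\<bar> \<le> C" if "i \<le> n-1" for k i
  proof (cases "i = 0")
    case True
    have "0 \<le> nrm n ((A k)(n:=y)) ((B k)(n:=0))" unfolding nrm_def by (rule cd_nonneg)
    then show ?thesis using True nC[of k] unfolding B_def by simp
  next
    case False
    then have "i \<in> {1..n}" using that n by auto
    then have "\<bar>((B k)(n:=0)) i\<bar> \<le> C" using nrm_coeff(2)[of i n "(B k)(n:=0)" "(A k)(n:=y)"] nC[of k] by linarith
    moreover have "i \<noteq> n" using that n by auto
    ultimately show ?thesis by simp
  qed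
  obtain r a b where r: "strict_mono r" and lim: "(\<lambda>k. cd (n-1) (A (r k)) (B (r k)) a b) \<longlonglongrightarrow> 0"
    using bw[of "n-1" A C B] bA bB by blast
  have "\<forall>\<eta>>0. mes {t\<in>torus. 1 + \<eta> \<le> \<bar>L n y a b t\<bar>} \<le> s"
  proof (intro allI impI)
    fix \<eta> :: real assume \<eta>: "\<eta> > 0"
    let ?E = "{t\<in>torus. 1 + \<eta> \<le> \<bar>L n y a b t\<bar>}"
    show "mes ?E \<le> s"
    proof (rule ccontr)
      assume "\<not> mes ?E \<le> s"
      then have eps: "mes ?E - s > 0" by simp
      have "\<forall>\<^sub>F k in sequentially. cd (n-1) (A (r k)) (B (r k)) a b < \<eta>"
        using lim \<eta> by (rule order_tendstoD(2))
      moreover obtain K :: nat where K: "1 / (mes ?E - s) < real K" using reals_Archimedean2 by blast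
      have "\<forall>\<^sub>F k in sequentially. K \<le> k" by (rule eventually_ge_at_top)
      ultimately have "\<forall>\<^sub>F k in sequentially. cd (n-1) (A (r k)) (B (r k)) a b < \<eta> \<and> K \<le> k"
        by (rule eventually_conj)
      then obtain M where "\<forall>k\<ge>M. cd (n-1) (A (r k)) (B (r k)) a b < \<eta> \<and> K \<le> k"
        unfolding eventually_sequentially by blast
      then obtain k where k: "cd (n-1) (A (r k)) (B (r k)) a b < \<eta>" "K \<le> k" by blast
      have rk: "k \<le> r k" using seq_suble[OF r] by simp
      have "1 / (real (r k) + 1) < mes ?E - s"
      proof -
        have "real K < real (r k) + 1" using k(2) rk by linarith
        then have "1 / (mes ?E - s) < real (r k) + 1" using K by linarith
        then show ?thesis using eps by (simp add: divide_less_eq mult.commute)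
      qed
      moreover have "mes ?E \<le> mu (L n y (A (r k)) (B (r k)))"
      proof -
        have sub: "?E \<subseteq> {t\<in>torus. 1 \<le> \<bar>L n y (A (r k)) (B (r k)) t\<bar>}"
        proof
          fix t assume t: "t \<in> ?E"
          have "\<bar>L n y (A (r k)) (B (r k)) t - L n y a b t\<bar> \<le> cd (n-1) (A (r k)) (B (r k)) a b"
            by (rule L_diff)
          then show "t \<in> {t\<in>torus. 1 \<le> \<bar>L n y (A (r k)) (B (r k)) t\<bar>}" using t k(1) by auto
        qed
        have m1: "?E \<in> lmeasurable"
          by (rule torus_lm[where P="\<lambda>x. 1 + \<eta> \<le> \<bar>x\<bar>", OF L_cont borel_gen(3)])
        have m2: "{t\<in>torus. 1 \<le> \<bar>L n y (A (r k)) (B (r k)) t\<bar>} \<in> lmeasurable"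
          by (rule torus_lm[where P="\<lambda>x. 1 \<le> \<bar>x\<bar>", OF L_cont borel_gen(3)])
        show ?thesis unfolding mu_def by (rule mes_mono[OF sub fmeasurableD[OF m1] m2])
      qed
      moreover have "mu (L n y (A (r k)) (B (r k))) < s + 1 / (real (r k) + 1)"
        using AB[of "r k"] by linarith
      ultimately show False by linarith
    qed
  qed
  then show ?thesis unfolding s_def by blast
qed

lemma sig_pos: assumes n: "n \<ge> 1" and y: "y > 1" shows "0 < sigma_n n y"
proof -
  obtain a b where ab: "\<forall>\<eta>>0. mes {t\<in>torus. 1 + \<eta> \<le> \<bar>L n y a b t\<bar>} \<le> sigma_n n y"
    using minim[OF n] by blast
  obtain t1 where t1: "t1 \<in> {0..<2*pi}" "\<bar>y\<bar> \<le> \<bar>L n y a b t1\<bar>" using ortho[OF n] by blast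
  define \<eta> where "\<eta> = (y - 1) / 2"
  have \<eta>: "\<eta> > 0" unfolding \<eta>_def using y by simp
  have E: "{t\<in>torus. 1 + \<eta> \<le> \<bar>L n y a b t\<bar>} \<in> lmeasurable"
    by (rule torus_lm[where P="\<lambda>x. 1 + \<eta> \<le> \<bar>x\<bar>", OF L_cont borel_gen(3)])
  have "0 < mes {t\<in>torus. 1 + \<eta> \<le> \<bar>L n y a b t\<bar>}"
  proof (rule pos_meas[OF _ _ _ E])
    show "t1 \<in> {0..2*pi}" using t1 by auto
    show "open {t. 1 + \<eta> < \<bar>L n y a b t\<bar>}" by (intro open_Collect_less continuous_intros L_cont)
    have "1 + \<eta> < y" unfolding \<eta>_def using y by (simp add: field_simps)
    moreover have "\<bar>y\<bar> = y" using y by simp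
    ultimately show "t1 \<in> {t. 1 + \<eta> < \<bar>L n y a b t\<bar>}" using t1(2) by simp
    show "{t. 1 + \<eta> < \<bar>L n y a b t\<bar>} \<inter> {0..<2 * pi} \<subseteq> {t\<in>torus. 1 + \<eta> \<le> \<bar>L n y a b t\<bar>}"
      unfolding torus_def by auto
  qed
  then show ?thesis using ab \<eta> by fastforce
qed

definition H :: "nat \<Rightarrow> real set \<Rightarrow> (real \<Rightarrow> real) \<Rightarrow> real" where
  "H n Q g = Sup ((\<lambda>t. \<bar>cos (real n * t) - g t\<bar>) ` Q)"

lemma U_set_H: "U_set n Q = Inf (H n Q ` trig_polys (n-1))"
  unfolding U_set_def H_def ..

lemma H_facts: assumes "compact Q" "Q \<noteq> {}" "continuous_on UNIV g"
  shows "bdd_above ((\<lambda>t. \<bar>cos (real n * t) - g t\<bar>) ` Q)"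
    and "\<And>t. t \<in> Q \<Longrightarrow> \<bar>cos (real n * t) - g t\<bar> \<le> H n Q g"
    and "0 \<le> H n Q g"
proof -
  have "continuous_on Q (\<lambda>t. \<bar>cos (real n * t) - g t\<bar>)"
    using assms(3) by (intro continuous_intros) (auto intro: continuous_on_subset)
  then have "compact ((\<lambda>t. \<bar>cos (real n * t) - g t\<bar>) ` Q)"
    using assms(1) by (rule compact_continuous_image)
  then show bdd: "bdd_above ((\<lambda>t. \<bar>cos (real n * t) - g t\<bar>) ` Q)"
    by (intro bounded_imp_bdd_above compact_imp_bounded)
  show le: "\<And>t. t \<in> Q \<Longrightarrow> \<bar>cos (real n * t) - g t\<bar> \<le> H n Q g"
    unfolding H_def by (rule cSup_upper[OF imageI bdd])
  obtain q where "q \<in> Q" using assms(2) by blast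
  then show "0 \<le> H n Q g" using le[of q] by linarith
qed

lemma trig_cont: "g \<in> trig_polys N \<Longrightarrow> continuous_on UNIV g"
  unfolding trig_polys_iff using tp_cont by blast

lemma lowerB: assumes n: "n \<ge> 1" and y: "y > 1" and Q: "compact Q" "Q \<subseteq> {0..2*pi}"
  "mes Q = 2*pi - sigma_n n y" and g: "g \<in> trig_polys (n-1)"
  shows "1 / y \<le> H n Q g"
proof (rule ccontr)
  assume "\<not> 1 / y \<le> H n Q g"
  then have c1: "H n Q g < 1 / y" by simp
  define s where "s = sigma_n n y"
  define c where "c = H n Q g"
  have mQ: "mes Q > 0" using Q(3) sig_lt[OF n] by simp
  have Qne: "Q \<noteq> {}" using mQ unfolding mes_def by auto
  obtain a b where gab: "g = tp (n-1) a b" using g unfolding trig_polys_iff by blast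
  have gc: "continuous_on UNIV g" using g by (rule trig_cont)
  have c0: "0 \<le> c" unfolding c_def by (rule H_facts(3)[OF Q(1) Qne gc])
  have hc: "\<And>t. t \<in> Q \<Longrightarrow> \<bar>cos (real n * t) - g t\<bar> \<le> c" unfolding c_def by (rule H_facts(2)[OF Q(1) Qne gc])
  define y' where "y' = 2 / (1/y + c)"
  have ypos: "0 < 1 / y + c" using c0 y by (simp add: add_pos_nonneg)
  have yy': "y < y'"
  proof -
    have "1/y + c < 2/y" using c1 c_def by simp
    then have "y * (1/y + c) < 2" using y by (simp add: field_simps)
    then show ?thesis unfolding y'_def using ypos by (simp add: field_simps)
  qed
  have y'c: "c < 1 / y'"
  proof -
    have "2 * c < 1/y + c" using c1 c_def by simp
    then show ?thesis unfolding y'_def using ypos by (simp add: field_simps)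
  qed
  have y'pos: "y' > 0" using yy' y by simp
  have iy: "1 / y' < 1 / y" using yy' y by (simp add: frac_less2)
  define k where "k t = cos (real n * t) - g t" for t
  have kc: "continuous_on UNIV k" unfolding k_def by (intro continuous_intros gc)
  have Lk: "L n z (\<lambda>i. - z * a i) (\<lambda>i. - z * b i) t = z * k t" for z t
    unfolding L_def k_def gab using tp_scale[of "n-1" "-z" a b t] by (simp add: algebra_simps)
  define A where "A = {t\<in>torus. 1 / y \<le> \<bar>k t\<bar>}"
  define B where "B = {t\<in>torus. 1 / y' \<le> \<bar>k t\<bar>}"
  define D where "D = {t\<in>torus. 1 / y' < \<bar>k t\<bar> \<and> \<bar>k t\<bar> < 1 / y}"
  have Am: "A \<in> lmeasurable" unfolding A_def by (rule torus_lm[where P="\<lambda>x. 1/y \<le> \<bar>x\<bar>", OF kc borel_gen(3)])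
  have Bm: "B \<in> lmeasurable" unfolding B_def by (rule torus_lm[where P="\<lambda>x. 1/y' \<le> \<bar>x\<bar>", OF kc borel_gen(3)])
  have Dm: "D \<in> lmeasurable" unfolding D_def
    by (rule torus_lm[where P="\<lambda>x. 1/y' < \<bar>x\<bar> \<and> \<bar>x\<bar> < 1/y", OF kc borel_gen(5)])
  have Qm: "Q \<in> lmeasurable" using Q(1) by (rule lmeasurable_compact)
  have "s \<le> mu (L n y (\<lambda>i. - y * a i) (\<lambda>i. - y * b i))" unfolding s_def by (rule sig_le)
  also have "mu (L n y (\<lambda>i. - y * a i) (\<lambda>i. - y * b i)) = mes A"
  proof -
    have "{t\<in>torus. \<bar>L n y (\<lambda>i. - y * a i) (\<lambda>i. - y * b i) t\<bar> \<ge> 1} = A"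
      unfolding A_def Lk using y by (auto simp: abs_mult field_simps)
    then show ?thesis unfolding mu_def by simp
  qed
  finally have sA: "s \<le> mes A" .
  have "mes A + mes D = mes (A \<union> D)"
    by (rule mes_Un[OF Am Dm, symmetric]) (auto simp: A_def D_def)
  also have "\<dots> \<le> mes B"
    by (rule mes_mono[OF _ _ Bm]) (use Am Dm iy in \<open>auto simp: A_def D_def B_def\<close>)
  finally have ADB: "mes A + mes D \<le> mes B" .
  have BQ: "B \<inter> Q = {}"
  proof -
    have "\<bar>k t\<bar> < 1 / y'" if "t \<in> Q" for t using hc[OF that] y'c unfolding k_def by linarith
    then show ?thesis unfolding B_def by force
  qed
  have "mes B + mes Q = mes (B \<union> Q)" by (rule mes_Un[OF Bm Qm BQ, symmetric])
  also have "\<dots> \<le> mes {0..2*pi}"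
    by (rule mes_mono) (use Bm Qm Q(2) in \<open>auto simp: B_def torus_def\<close>)
  also have "\<dots> = 2*pi" unfolding mes_def by simp
  finally have BQ2: "mes B + mes Q \<le> 2*pi" .
  obtain t1 where t1: "t1 \<in> {0..<2*pi}" "\<bar>y'\<bar> \<le> \<bar>L n y' (\<lambda>i. - y' * a i) (\<lambda>i. - y' * b i) t1\<bar>"
    using ortho[OF n] by blast
  have kt1: "1 \<le> \<bar>k t1\<bar>" using t1(2) y'pos unfolding Lk by (simp add: abs_mult)
  obtain q where q: "q \<in> Q" using Qne by blast
  have kq: "\<bar>k q\<bar> < 1/y'" using hc[OF q] y'c unfolding k_def by linarith
  define w where "w = (1/y' + 1/y) / 2"
  have w: "1/y' < w" "w < 1/y" using iy unfolding w_def by auto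
  have "1 / y < 1" using y by simp
  then have w1: "w < 1" using w by linarith
  have kac: "continuous_on S (\<lambda>t. \<bar>k t\<bar>)" for S using kc by (intro continuous_intros) (auto intro: continuous_on_subset)
  have q02: "q \<in> {0..2*pi}" using q Q(2) by blast
  obtain ts where ts: "ts \<in> {0..2*pi}" "\<bar>k ts\<bar> = w"
  proof (cases "q \<le> t1")
    case True
    obtain x where x: "q \<le> x" "x \<le> t1" "\<bar>k x\<bar> = w"
      using IVT'[of "\<lambda>t. \<bar>k t\<bar>" q w t1, OF _ _ True kac] kq w kt1 w1 by auto
    have "x \<in> {0..2*pi}" using x q02 t1 by auto
    then show ?thesis using that x(3) by blast
  next
    case False
    obtain x where x: "t1 \<le> x" "x \<le> q" "\<bar>k x\<bar> = w"
      using IVT2'[of "\<lambda>t. \<bar>k t\<bar>" q w t1, OF _ _ _ kac] False kq w kt1 w1 by auto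
    have "x \<in> {0..2*pi}" using x q02 t1 by auto
    then show ?thesis using that x(3) by blast
  qed
  have "0 < mes D"
  proof (rule pos_meas[OF ts(1) _ _ Dm])
    show "open {t. 1 / y' < \<bar>k t\<bar> \<and> \<bar>k t\<bar> < 1 / y}"
      by (intro open_Collect_conj open_Collect_less continuous_intros kc)
    show "ts \<in> {t. 1 / y' < \<bar>k t\<bar> \<and> \<bar>k t\<bar> < 1 / y}" using ts w by simp
    show "{t. 1 / y' < \<bar>k t\<bar> \<and> \<bar>k t\<bar> < 1 / y} \<inter> {0..<2 * pi} \<subseteq> D"
      unfolding D_def torus_def by auto
  qed
  then show False using sA ADB BQ2 Q(3) unfolding s_def by linarith
qed

lemma upperA: assumes n: "n \<ge> 1" and y: "y > 1" and \<eta>: "\<eta> > 0"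
  shows "\<exists>Q. compact Q \<and> Q \<subseteq> {0..2*pi} \<and> mes Q = 2*pi - sigma_n n y \<and> U_set n Q \<le> (1 + \<eta>) / y"
proof -
  define s where "s = sigma_n n y"
  define m where "m = 2*pi - s"
  have m0: "m > 0" unfolding m_def s_def using sig_lt[OF n] by simp
  obtain a b where ab: "\<forall>\<eta>>0. mes {t\<in>torus. 1 + \<eta> \<le> \<bar>L n y a b t\<bar>} \<le> s"
    using minim[OF n] unfolding s_def by blast
  define f where "f = L n y a b"
  have fc: "continuous_on UNIV f" unfolding f_def by (rule L_cont)
  define S where "S x = {t\<in>{0..x}. \<bar>f t\<bar> \<le> 1 + \<eta>}" for x
  define \<phi> where "\<phi> x = mes (S x)" for x
  have Sm: "S x \<in> lmeasurable" for x unfolding S_def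
    by (rule lmeas[where P="\<lambda>z. \<bar>z\<bar> \<le> 1 + \<eta>", OF fc Icc_sets _ borel_le]) simp
  have mono: "\<phi> x \<le> \<phi> x' \<and> \<phi> x' \<le> \<phi> x + (x' - x)" if "x \<le> x'" for x x'
  proof
    show "\<phi> x \<le> \<phi> x'" unfolding \<phi>_def
      by (rule mes_mono[OF _ fmeasurableD[OF Sm] Sm]) (use that in \<open>auto simp: S_def\<close>)
    have "\<phi> x' \<le> mes (S x \<union> {x..x'})" unfolding \<phi>_def
      by (rule mes_mono[OF _ fmeasurableD[OF Sm]]) (use that Sm in \<open>auto simp: S_def\<close>)
    also have "\<dots> \<le> mes (S x) + mes {x..x'}" unfolding mes_def
      by (rule measure_Un_le) (use Sm in auto)
    also have "mes {x..x'} = x' - x" unfolding mes_def using that by simp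
    finally show "\<phi> x' \<le> \<phi> x + (x' - x)" unfolding \<phi>_def .
  qed
  have lip: "dist (\<phi> x) (\<phi> x') \<le> 1 * dist x x'" for x x'
  proof (cases "x \<le> x'")
    case True then show ?thesis using mono[OF True] by (simp add: dist_real_def)
  next
    case False then have "x' \<le> x" by simp
    then show ?thesis using mono[OF \<open>x' \<le> x\<close>] by (simp add: dist_real_def)
  qed
  have cont: "continuous_on {0..2*pi} \<phi>"
    by (rule lipschitz_on_continuous_on[of 1]) (rule lipschitz_onI[OF lip], simp)
  have \<phi>0: "\<phi> 0 \<le> m"
  proof -
    have z: "{0::real} \<in> lmeasurable" by (rule lmeasurable_compact) simp
    have "\<phi> 0 \<le> mes {0::real}" unfolding \<phi>_def
      by (rule mes_mono[OF _ fmeasurableD[OF Sm] z]) (auto simp: S_def)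
    then show ?thesis using m0 unfolding mes_def by simp
  qed
  have \<phi>1: "m \<le> \<phi> (2*pi)"
  proof -
    have "mes {t\<in>torus. 1 + \<eta> \<le> \<bar>f t\<bar>} + mes {t\<in>torus. \<bar>f t\<bar> < 1 + \<eta>} = 2*pi"
      by (rule compl) (intro continuous_intros fc)
    moreover have "mes {t\<in>torus. 1 + \<eta> \<le> \<bar>f t\<bar>} \<le> s" using ab \<eta> unfolding f_def by blast
    moreover have "mes {t\<in>torus. \<bar>f t\<bar> < 1 + \<eta>} \<le> \<phi> (2*pi)" unfolding \<phi>_def
    proof (rule mes_mono[OF _ _ Sm])
      show "{t \<in> torus. \<bar>f t\<bar> < 1 + \<eta>} \<subseteq> S (2 * pi)" unfolding S_def torus_def by auto
      show "{t \<in> torus. \<bar>f t\<bar> < 1 + \<eta>} \<in> sets lebesgue"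
        by (rule fmeasurableD, rule torus_lm[where P="\<lambda>z. \<bar>z\<bar> < 1 + \<eta>", OF fc borel_gen(4)])
    qed
    ultimately show ?thesis unfolding m_def by linarith
  qed
  obtain x where x: "0 \<le> x" "x \<le> 2*pi" "\<phi> x = m"
    using IVT'[of \<phi> 0 m "2*pi", OF \<phi>0 \<phi>1 _ cont] by auto
  define Q where "Q = S x"
  have Qc: "compact Q"
  proof -
    have "Q = {t. \<bar>f t\<bar> \<le> 1 + \<eta>} \<inter> {0..x}" unfolding Q_def S_def by auto
    moreover have "closed {t. \<bar>f t\<bar> \<le> 1 + \<eta>}" by (intro closed_Collect_le continuous_intros fc)
    ultimately show ?thesis using closed_Int_compact[OF _ compact_Icc] by metis
  qed
  have Qsub: "Q \<subseteq> {0..2*pi}" unfolding Q_def S_def using x by auto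
  have mQ: "mes Q = m" unfolding Q_def using x(3) unfolding \<phi>_def .
  have Qne: "Q \<noteq> {}" using mQ m0 unfolding mes_def by auto
  define g where "g = tp (n-1) (\<lambda>i. - (1/y) * a i) (\<lambda>i. - (1/y) * b i)"
  have g: "g \<in> trig_polys (n-1)" unfolding g_def trig_polys_iff by blast
  have gc: "continuous_on UNIV g" using g by (rule trig_cont)
  have cg: "cos (real n * t) - g t = f t / y" for t
  proof -
    have "g t = - (1/y) * tp (n-1) a b t" unfolding g_def by (rule tp_scale)
    moreover have "f t / y = y * cos (real n * t) / y + tp (n-1) a b t / y"
      unfolding f_def L_def by (rule add_divide_distrib)
    moreover have "y * cos (real n * t) / y = cos (real n * t)" using y by simp
    ultimately show ?thesis by simp
  qed
  have "H n Q g \<le> (1 + \<eta>) / y" unfolding H_def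
  proof (rule cSup_least)
    show "(\<lambda>t. \<bar>cos (real n * t) - g t\<bar>) ` Q \<noteq> {}" using Qne by simp
    fix v assume "v \<in> (\<lambda>t. \<bar>cos (real n * t) - g t\<bar>) ` Q"
    then obtain t where t: "t \<in> Q" "v = \<bar>cos (real n * t) - g t\<bar>" by blast
    have "\<bar>f t\<bar> \<le> 1 + \<eta>" using t(1) unfolding Q_def S_def by simp
    then show "v \<le> (1 + \<eta>) / y" unfolding t(2) cg using y by (simp add: abs_div divide_right_mono)
  qed
  moreover have "U_set n Q \<le> H n Q g" unfolding U_set_H
  proof (rule cInf_lower)
    show "H n Q g \<in> H n Q ` trig_polys (n - 1)" using g by (rule imageI)
    show "bdd_below (H n Q ` trig_polys (n - 1))"
      by (rule bdd_belowI[of _ 0]) (use H_facts(3)[OF Qc Qne] trig_cont in auto)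
  qed
  ultimately have "U_set n Q \<le> (1 + \<eta>) / y" by linarith
  moreover have "mes Q = 2*pi - sigma_n n y" using mQ unfolding m_def s_def .
  ultimately show ?thesis using Qc Qsub by blast
qed

theorem corollary3:
  fixes n :: nat and y :: real
  assumes "n \<ge> 1" and "y > 1"
  defines "\<alpha> \<equiv> (2*pi - sigma_n n y) / 2"
  shows "0 < \<alpha> \<and> \<alpha> < pi \<and> U_meas n (2*\<alpha>) = 1 / y"
proof -
  have s1: "sigma_n n y < 2*pi" by (rule sig_lt[OF assms(1)])
  have s0: "0 < sigma_n n y" by (rule sig_pos[OF assms(1,2)])
  define m where "m = 2*pi - sigma_n n y"
  have am: "2*\<alpha> = m" unfolding \<alpha>_def m_def by simp
  define Fam where "Fam = U_set n ` {Q. compact Q \<and> Q \<subseteq> {0..2*pi} \<and> mes Q = m}"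
  have low: "1 / y \<le> v" if v: "v \<in> Fam" for v
  proof -
    obtain Q where Q0: "Q \<in> {Q. compact Q \<and> Q \<subseteq> {0..2*pi} \<and> mes Q = m}" and Q4: "v = U_set n Q"
      using v unfolding Fam_def by auto
    have Q: "compact Q" "Q \<subseteq> {0..2*pi}" "mes Q = m" using Q0 by simp_all
    have ne: "H n Q ` trig_polys (n-1) \<noteq> {}"
    proof -
      have "tp (n-1) (\<lambda>_. 0) (\<lambda>_. 0) \<in> trig_polys (n-1)" unfolding trig_polys_iff by blast
      then show ?thesis by (metis empty_iff imageI)
    qed
    have "1 / y \<le> Inf (H n Q ` trig_polys (n-1))"
    proof (rule cInf_greatest[OF ne])
      fix z assume "z \<in> H n Q ` trig_polys (n-1)"
      then obtain g where g: "z = H n Q g" "g \<in> trig_polys (n-1)" by (rule imageE)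
      have mQ: "mes Q = 2*pi - sigma_n n y" using Q(3) unfolding m_def .
      show "1 / y \<le> z" unfolding g(1)
        by (rule lowerB[OF assms(1,2) Q(1,2) mQ g(2)])
    qed
    then show ?thesis unfolding Q4 U_set_H .
  qed
  have upp: "\<exists>v\<in>Fam. v \<le> (1 + e) / y" if e: "e > 0" for e
  proof -
    obtain Q where "compact Q" "Q \<subseteq> {0..2*pi}" "mes Q = m" "U_set n Q \<le> (1 + e) / y"
      using upperA[OF assms(1,2) e] unfolding m_def by blast
    then have Qin: "Q \<in> {Q. compact Q \<and> Q \<subseteq> {0..2*pi} \<and> mes Q = m}" and Ule: "U_set n Q \<le> (1 + e) / y" by simp_all
    have "U_set n Q \<in> Fam" unfolding Fam_def by (rule imageI[OF Qin])
    then show ?thesis using Ule by (rule bexI[rotated])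
  qed
  have Fne: "Fam \<noteq> {}" using upp[of 1] by auto
  have Fbdd: "bdd_below Fam" by (rule bdd_belowI[of _ "1/y"]) (rule low)
  have ge: "1 / y \<le> Inf Fam" by (rule cInf_greatest[OF Fne low])
  have le: "Inf Fam \<le> 1 / y"
  proof (rule ccontr)
    assume "\<not> Inf Fam \<le> 1 / y"
    then have gt: "1 / y < Inf Fam" by simp
    define e where "e = (Inf Fam - 1/y) * y / 2"
    have e: "e > 0" unfolding e_def using gt assms(2) by simp
    obtain v where v: "v \<in> Fam" "v \<le> (1 + e) / y" using upp[OF e] by blast
    have "Inf Fam \<le> v" by (rule cInf_lower[OF v(1) Fbdd])
    moreover have "(1 + e) / y = 1/y + (Inf Fam - 1/y) / 2"
      unfolding e_def using assms(2) by (simp add: field_simps)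
    ultimately show False using v(2) gt by argo
  qed
  have "U_meas n (2*\<alpha>) = Inf Fam" unfolding U_meas_def Fam_def am ..
  then have "U_meas n (2*\<alpha>) = 1 / y" using ge le by simp
  moreover have "0 < \<alpha>" unfolding \<alpha>_def using s1 by simp
  moreover have "\<alpha> < pi" unfolding \<alpha>_def using s0 by simp
  ultimately show ?thesis by simp
qed

end
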